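(* Let $V$ be an $m$-dimensional vector space of differentiable functions with basis $B=\{f_1,\ldots,f_m\}$ such that $f'\in V$ for every $f\in V$, and let $\mathcal D$ be the $m\times m$ matrix differential operator of $V$ with respect to $B$. Let $\phi_n(s)=a_ns^n+\cdots+a_1s+a_0$ be a polynomial of degree $n$ with $a_0=\phi_n(0)\neq 0$, and let $\frac{1}{\phi_n(s)}=\sum_{k=0}^\infty c_ks^k$ be its Maclaurin expansion. Assume the matrix $\phi_n(\mathcal D)$ is invertible. Let $g\in V$ with coordinate vector $\mathbf g=[g]_B$. Then: (i) for all complex $t$ with $|t|$ sufficiently small, the vector series $\sum_{k=0}^\infty c_kt^k\mathcal D^k\mathbf g$ converges and equals $(\phi_n(t\mathcal D))^{-1}\mathbf g$, each of whose $m$ components is a rational function of $t$ defined at $t=0$ and at $t=1$; (ii) for each $j=1,\ldots,m$, the numerical series formed by the $j$-th components of $c_k\mathcal D^k\mathbf g$, $k=0,1,2,\ldots$, is summable by the Euler method $\mathfrak E$, and $$\sum_{k=0}^\infty c_k\mathcal D^k\mathbf g=(\phi_n(\mathcal D))^{-1}\mathbf g\quad(\mathfrak E)$$ componentwise; (iii) the function $y_p\in V$ with coordinate vector $(\phi_n(\mathcal D))^{-1}\mathbf g$ is a particular solution of the differential equation $\phi_n(D)y=g$.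
   Context: Matrix differential operator: if $f_i'=\sum_{j=1}^m c_{ij}f_j$ for $i=1,\ldots,m$, then $\mathcal D$ is the $m\times m$ matrix whose $i$-th column is $(c_{i1},\ldots,c_{im})^T$, i.e. the coordinate vector of $f_i'$; for $f\in V$ with coordinate vector $\mathbf f=[f]_B$ one has $[f']_B=\mathcal D\mathbf f$. For a polynomial $\psi(s)=\sum_j b_js^j$, $\psi(\mathcal D)=\sum_j b_j\mathcal D^j$ (with $\mathcal D^0=I_m$) and $\psi(D)y=\sum_j b_jy^{(j)}$. Euler summation: a numerical series $\sum_{n=0}^\infty a_n$ is summable by the Euler method $\mathfrak E$ to $s$, written $\sum a_n=s\,(\mathfrak E)$, if the power series $\sum_{n=0}^\infty a_nt^n$ converges for all sufficiently small $|t|$ and its sum extends to a single-valued analytic function $F$ of the complex variable $t$ on an open connected region containing $0$ and $1$, with $F(1)=s$. *)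

theory Defs
  imports "HOL-Analysis.Analysis" "HOL-Computational_Algebra.Polynomial"
begin

primrec matpow :: "'a::semiring_1^'n^'n \<Rightarrow> nat \<Rightarrow> 'a^'n^'n" where
  "matpow A 0 = mat 1"
| "matpow A (Suc k) = A ** matpow A k"

definition mat_scale :: "'a::times \<Rightarrow> 'a^'n^'m \<Rightarrow> 'a^'n^'m" where
  "mat_scale c A = (\<chi> i j. c * A $ i $ j)"

definition poly_matrix :: "'a::comm_ring_1 poly \<Rightarrow> 'a^'n^'n \<Rightarrow> 'a^'n^'n" where
  "poly_matrix p A = (\<Sum>j\<le>degree p. mat_scale (coeff p j) (matpow A j))"

primrec nth_vderiv :: "nat \<Rightarrow> (real \<Rightarrow> complex) \<Rightarrow> real \<Rightarrow> complex" where
  "nth_vderiv 0 y = y"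
| "nth_vderiv (Suc k) y = (\<lambda>x. vector_derivative (nth_vderiv k y) (at x))"

text \<open>Euler summability (method E): the power series sum a_n t^n converges for all
  sufficiently small |t| and its sum extends to a single-valued analytic function F on an
  open connected region containing 0 and 1, with F(1) = s.\<close>
definition euler_sums :: "(nat \<Rightarrow> complex) \<Rightarrow> complex \<Rightarrow> bool" where
  "euler_sums a s \<longleftrightarrow>
     (\<exists>\<rho>>0. (\<forall>t. norm t < \<rho> \<longrightarrow> summable (\<lambda>n. a n * t ^ n)) \<and>
       (\<exists>F U. open U \<and> connected U \<and> 0 \<in> U \<and> 1 \<in> U \<and> F holomorphic_on U \<and>
          (\<forall>t\<in>U \<inter> ball 0 \<rho>. F t = (\<Sum>n. a n * t ^ n)) \<and> F 1 = s))"

end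

theory Submission
  imports Defs "HOL-Complex_Analysis.Complex_Analysis"
begin

lemma matrix_inv_props:
  fixes A :: "'a::field^'n^'n"
  assumes "invertible A"
  shows "A ** matrix_inv A = mat 1" "matrix_inv A ** A = mat 1"
proof -
  have "\<exists>A'. A ** A' = mat 1 \<and> A' ** A = mat 1" using assms unfolding invertible_def by blast
  from someI_ex[OF this] show "A ** matrix_inv A = mat 1" "matrix_inv A ** A = mat 1"
    unfolding matrix_inv_def by auto
qed

lemma matrix_inv_apply:
  fixes A :: "'a::field^'n^'n"
  assumes "invertible A" "A *v x = b"
  shows "matrix_inv A *v b = x"
  using assms matrix_inv_props[OF assms(1)]
  by (metis matrix_vector_mul_assoc matrix_vector_mul_lid)

lemma matrix_inv_apply2:
  fixes A :: "'a::field^'n^'n"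
  assumes "invertible A"
  shows "A *v (matrix_inv A *v b) = b"
  using matrix_inv_props[OF assms(1)]
  by (metis matrix_vector_mul_assoc matrix_vector_mul_lid)

lemma mat_scale_mult_vec: "mat_scale a M *v v = a *s (M *v v)"
  by (simp add: mat_scale_def matrix_vector_mult_def vec_eq_iff sum_distrib_left mult.assoc)

lemma sum_mat_mult_vec:
  fixes M :: "'i \<Rightarrow> 'a::comm_semiring_1^'n^'m"
  shows "(\<Sum>j\<in>J. M j) *v v = (\<Sum>j\<in>J. M j *v v)"
proof (induction J rule: infinite_finite_induct)
  case (insert x F) then show ?case by (simp add: matrix_vector_mult_def vec_eq_iff sum.distrib ring_distribs)
qed (auto simp: matrix_vector_mult_def vec_eq_iff)

lemma poly_matrix_mult_vec:
  "poly_matrix p M *v v = (\<Sum>j\<le>degree p. coeff p j *s (matpow M j *v v))"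
  by (simp add: poly_matrix_def sum_mat_mult_vec mat_scale_mult_vec)

lemma matpow_scale: "matpow (mat_scale t D) j = mat_scale (t ^ j) (matpow D j)"
  for D :: "'a::comm_semiring_1^'n^'n"
proof (induction j)
  case 0 show ?case by (simp add: mat_scale_def mat_def vec_eq_iff)
next
  case (Suc j)
  have "matpow (mat_scale t D) (Suc j) = mat_scale t D ** mat_scale (t^j) (matpow D j)"
    by (simp add: Suc)
  also have "\<dots> = mat_scale (t ^ Suc j) (matpow D (Suc j))"
    by (simp add: mat_scale_def matrix_matrix_mult_def vec_eq_iff sum_distrib_left mult_ac)
  finally show ?case .
qed

lemma matpow_add: "matpow D j ** matpow D k = matpow D (j + k)"
  by (induction j) (auto simp: matrix_mul_assoc[symmetric])

lemma matpow_vec_Suc: "matpow D (Suc k) *v v = D *v (matpow D k *v v)"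
  by (simp add: matrix_vector_mul_assoc)

definition PM :: "'a::comm_ring_1 poly \<Rightarrow> 'a^'n^'n \<Rightarrow> 'a poly^'n^'n" where
  "PM p D = (\<chi> i l. \<Sum>j\<le>degree p. monom (coeff p j * matpow D j $ i $ l) j)"

lemma poly_matrix_scale_PM:
  "poly_matrix p (mat_scale t D) = (\<chi> i l. poly (PM p D $ i $ l) t)"
  unfolding poly_matrix_def PM_def matpow_scale
  by (simp add: vec_eq_iff poly_sum poly_monom mat_scale_def sum_component mult_ac)

lemma det_poly:
  fixes M :: "'a::comm_ring_1 poly^'n^'n"
  shows "det (\<chi> i l. poly (M $ i $ l) t) = poly (det M) t"
  by (simp add: det_def poly_sum poly_prod)

lemma scalar_ident:
  fixes \<phi> :: "complex poly" and c :: "nat \<Rightarrow> complex"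
  assumes a0: "poly \<phi> 0 \<noteq> 0"
    and mac: "\<exists>r>0. \<forall>s::complex. norm s < r \<longrightarrow> (\<lambda>k. c k * s ^ k) sums (1 / poly \<phi> s)"
  shows "(\<Sum>j\<le>k. coeff \<phi> j * c (k - j)) = (if k = 0 then 1 else 0)"
proof -
  obtain r where r: "r > 0" "\<And>s::complex. norm s < r \<Longrightarrow> (\<lambda>k. c k * s ^ k) sums (1 / poly \<phi> s)"
    using mac by blast
  define C where "C = Abs_fps c"
  have "fps_conv_radius C \<ge> ereal (r/2)"
  proof -
    have "summable (\<lambda>k. c k * (of_real (r/2)) ^ k)"
      using r by (intro sums_summable[OF r(2)]) (auto)
    from conv_radius_geI[OF this] r show ?thesis by (simp add: fps_conv_radius_def C_def)
  qed
  then have rad: "fps_conv_radius C > 0" using r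
    by (meson ereal_less(2) half_gt_zero less_le_trans)
  have ev: "eventually (\<lambda>z. eval_fps C z = 1 / poly \<phi> z) (nhds 0)"
  proof -
    have "eventually (\<lambda>z. z \<in> ball 0 r) (nhds (0::complex))"
      using r by (intro eventually_nhds_in_open) auto
    then show ?thesis
      by eventually_elim (auto simp: eval_fps_def C_def intro!: sums_unique[symmetric] r(2))
  qed
  have e1: "(\<lambda>z. 1 / poly \<phi> z) has_fps_expansion C"
    using rad ev by (simp add: has_fps_expansion_def)
  have e2: "poly \<phi> has_fps_expansion fps_of_poly \<phi>"
    by (simp add: has_fps_expansion_def)
  have e3: "(\<lambda>z. 1 / poly \<phi> z * poly \<phi> z) has_fps_expansion C * fps_of_poly \<phi>"
    by (intro has_fps_expansion_mult e1 e2)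
  have "eventually (\<lambda>z. poly \<phi> z \<noteq> 0) (nhds (0::complex))"
  proof (rule tendsto_imp_eventually_ne)
    have "isCont (poly \<phi>) 0" by simp
    then show "(poly \<phi> \<longlongrightarrow> poly \<phi> 0) (nhds 0)"
      by (simp add: isCont_def tendsto_at_iff_tendsto_nhds)
  qed (use a0 in auto)
  then have evv: "eventually (\<lambda>z. 1 / poly \<phi> z * poly \<phi> z = 1) (nhds (0::complex))"
    by eventually_elim auto
  then have e4: "(\<lambda>z::complex. 1) has_fps_expansion C * fps_of_poly \<phi>"
    using e3 has_fps_expansion_cong[OF evv refl] by simp
  have "C * fps_of_poly \<phi> = 1"
  proof (rule fps_ext)
    fix n
    show "(C * fps_of_poly \<phi>) $ n = (1::complex fps) $ n"
      using fps_nth_fps_expansion[OF e4, of n] fps_nth_fps_expansion[OF has_fps_expansion_1, of n]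
      by simp
  qed
  then have "(C * fps_of_poly \<phi>) $ k = (if k = 0 then 1 else 0)" by simp
  then have "(\<Sum>i\<le>k. c i * coeff \<phi> (k - i)) = (if k = 0 then 1 else 0)"
    by (simp add: fps_mult_nth C_def atLeast0AtMost)
  moreover have "(\<Sum>i\<le>k. c i * coeff \<phi> (k - i)) = (\<Sum>j\<le>k. coeff \<phi> j * c (k - j))"
    by (subst sum.atLeastAtMost_rev[of _ 0 k, simplified atLeast0AtMost]) (auto simp: mult.commute intro!: sum.cong)
  ultimately show ?thesis by simp
qed

lemma norm_smult_vec: "norm (a *s (x::complex^'n)) = norm a * norm x"
  unfolding norm_vec_def
  by (simp add: L2_set_right_distrib norm_mult)

lemma mv_smult: "M *v (a *s v) = a *s (M *v v)" for M :: "'a::comm_semiring_1^'n^'m"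
  by (simp add: vec_eq_iff matrix_vector_mult_def sum_distrib_left mult_ac)

lemma bounded_linear_vector_smult: "bounded_linear (\<lambda>x::complex^'n. a *s x)"
  by (rule bounded_linear_intro[where K="norm a"])
     (auto simp: vec_eq_iff norm_smult_vec ring_distribs scaleR_conv_of_real)

lemma series_part:
  fixes D :: "complex^'m^'m" and gv :: "complex^'m" and \<phi> :: "complex poly"
  assumes a0: "poly \<phi> 0 \<noteq> 0"
    and mac: "\<exists>r>0. \<forall>s::complex. norm s < r \<longrightarrow> (\<lambda>k. c k * s ^ k) sums (1 / poly \<phi> s)"
  shows "\<exists>r>0. \<forall>t::complex. norm t < r \<longrightarrow>
     summable (\<lambda>k. (c k * t ^ k) *s (matpow D k *v gv)) \<and>
     poly_matrix \<phi> (mat_scale t D) *v (\<Sum>k. (c k * t ^ k) *s (matpow D k *v gv)) = gv"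
proof -
  obtain r0 where r0: "r0 > 0" "\<And>s::complex. norm s < r0 \<Longrightarrow> (\<lambda>k. c k * s ^ k) sums (1 / poly \<phi> s)"
    using mac by blast
  obtain K where K: "K > 0" "\<And>x. norm (D *v x) \<le> norm x * K"
    using bounded_linear.pos_bounded[OF matrix_vector_mul_bounded_linear[of D]] by blast
  have uK: "norm (matpow D k *v gv) \<le> K ^ k * norm gv" for k
  proof (induction k)
    case (Suc k)
    have "norm (matpow D (Suc k) *v gv) \<le> norm (matpow D k *v gv) * K"
      unfolding matpow_vec_Suc by (rule K(2))
    also have "\<dots> \<le> K ^ k * norm gv * K" using Suc K(1) by (intro mult_right_mono) auto
    finally show ?case by (simp add: mult_ac)
  qed simp
  define r where "r = r0 / (2 * K)"
  have rpos: "r > 0" using r0 K by (simp add: r_def)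
  have "\<forall>t::complex. norm t < r \<longrightarrow>
     summable (\<lambda>k. (c k * t ^ k) *s (matpow D k *v gv)) \<and>
     poly_matrix \<phi> (mat_scale t D) *v (\<Sum>k. (c k * t ^ k) *s (matpow D k *v gv)) = gv"
  proof (intro allI impI)
    fix t :: complex assume t: "norm t < r"
    define u where "u k = matpow D k *v gv" for k
    define T where "T k = (c k * t ^ k) *s u k" for k
    have tK: "norm t * K < r0 / 2" using t K by (simp add: r_def field_simps)
    have s1: "summable (\<lambda>k. c k * (of_real (r0/2) :: complex) ^ k)"
      using r0 by (intro sums_summable[OF r0(2)]) auto
    have s2: "summable (\<lambda>n. norm (c n * (of_real (norm t * K) :: complex) ^ n))"
      by (rule powser_insidea[OF s1]) (use tK K r0(1) in \<open>auto simp: norm_mult abs_mult\<close>)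
    have s3: "summable (\<lambda>n. norm (c n) * (norm t * K) ^ n * norm gv)"
      using summable_mult2[OF s2, of "norm gv"] K
      by (simp add: norm_mult norm_power abs_mult)
    have sT: "summable T"
    proof (rule summable_comparison_test[OF _ s3])
      show "\<exists>N. \<forall>n\<ge>N. norm (T n) \<le> norm (c n) * (norm t * K) ^ n * norm gv"
      proof (intro exI allI impI)
        fix n
        have "norm (T n) = norm (c n) * norm t ^ n * norm (u n)"
          by (simp add: T_def norm_smult_vec norm_mult norm_power)
        also have "\<dots> \<le> norm (c n) * norm t ^ n * (K ^ n * norm gv)"
          unfolding u_def by (intro mult_left_mono uK) auto
        finally show "norm (T n) \<le> norm (c n) * (norm t * K) ^ n * norm gv"
          by (simp add: power_mult_distrib mult_ac)
      qed
    qed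
    define S where "S = suminf T"
    have TS: "T sums S" using sT by (simp add: S_def summable_sums)
    define N where "N = degree \<phi>"
    define W where "W j k = (if j \<le> k then (coeff \<phi> j * c (k - j) * t ^ k) *s u k else 0)" for j k
    have Wj: "W j sums ((coeff \<phi> j * t ^ j) *s (matpow D j *v S))" for j
    proof -
      have "(\<lambda>k. matpow D j *v T k) sums (matpow D j *v S)"
        by (rule bounded_linear.sums[OF matrix_vector_mul_bounded_linear TS])
      then have "(\<lambda>k. (coeff \<phi> j * t ^ j) *s (matpow D j *v T k)) sums ((coeff \<phi> j * t ^ j) *s (matpow D j *v S))"
        by (rule bounded_linear.sums[OF bounded_linear_vector_smult]) 
      moreover have "(coeff \<phi> j * t ^ j) *s (matpow D j *v T k) = W j (k + j)" for k
        by (simp add: W_def T_def u_def mv_smult matrix_vector_mul_assoc matpow_add power_add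
             vector_smult_assoc mult_ac add.commute)
      ultimately have "(\<lambda>k. W j (k + j)) sums ((coeff \<phi> j * t ^ j) *s (matpow D j *v S))" by simp
      then show ?thesis by (subst (asm) sums_zero_iff_shift) (auto simp: W_def)
    qed
    have "(\<lambda>k. \<Sum>j\<le>N. W j k) sums (\<Sum>j\<le>N. (coeff \<phi> j * t ^ j) *s (matpow D j *v S))"
      by (rule sums_sum) (rule Wj)
    also have "(\<Sum>j\<le>N. (coeff \<phi> j * t ^ j) *s (matpow D j *v S)) = poly_matrix \<phi> (mat_scale t D) *v S"
      by (simp add: poly_matrix_mult_vec N_def matpow_scale mat_scale_mult_vec vector_smult_assoc)
    finally have A: "(\<lambda>k. \<Sum>j\<le>N. W j k) sums (poly_matrix \<phi> (mat_scale t D) *v S)" .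
    have "(\<Sum>j\<le>N. W j k) = (if k = 0 then gv else 0)" for k
    proof -
      have "(\<Sum>j\<le>N. W j k) = (\<Sum>j\<in>{..N}\<inter>{..k}. (coeff \<phi> j * c (k - j) * t ^ k) *s u k)"
        by (simp add: W_def sum.If_cases Int_def)
      also have "\<dots> = (\<Sum>j\<le>k. (coeff \<phi> j * c (k - j) * t ^ k) *s u k)"
        by (rule sum.mono_neutral_left) (auto simp: N_def coeff_eq_0)
      also have "\<dots> = ((\<Sum>j\<le>k. coeff \<phi> j * c (k - j)) * t ^ k) *s u k"
        by (simp add: vec_eq_iff sum_component sum_distrib_right)
      also have "\<dots> = (if k = 0 then gv else 0)"
        by (simp add: scalar_ident[OF a0 mac] u_def)
      finally show ?thesis .
    qed
    then have "(\<lambda>k. \<Sum>j\<le>N. W j k) = (\<lambda>k. if k = 0 then gv else 0)" by auto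
    moreover have "(\<lambda>k. if k = 0 then gv else 0) sums gv"
      using sums_single[of 0 "\<lambda>_. gv"] by simp
    ultimately have "poly_matrix \<phi> (mat_scale t D) *v S = gv"
      using A sums_unique2 by metis
    then show "summable T \<and> poly_matrix \<phi> (mat_scale t D) *v suminf T = gv"
      using sT S_def by simp
  qed
  with rpos show ?thesis by blast
qed

lemma sum_delta0: "(\<Sum>j\<le>(N::nat). g j * (if j = 0 then 1 else 0)) = (g 0::'a::comm_semiring_1)"
proof -
  have e: "(\<lambda>j. g j * (if j = 0 then 1 else 0)) = (\<lambda>j. if j = 0 then g 0 else 0)" by auto
  show ?thesis by (subst e, subst sum.delta) auto
qed

lemma lin_deriv:
  fixes f :: "'m::finite \<Rightarrow> real \<Rightarrow> complex" and D :: "complex^'m^'m"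
  assumes D_deriv: "\<And>i x. (f i has_vector_derivative (\<Sum>j\<in>UNIV. D $ j $ i * f j x)) (at x)"
  shows "((\<lambda>x. \<Sum>i\<in>UNIV. v $ i * f i x) has_vector_derivative (\<Sum>i\<in>UNIV. (D *v v) $ i * f i x)) (at x)"
proof -
  have "((\<lambda>x. \<Sum>i\<in>UNIV. v $ i * f i x) has_vector_derivative
         (\<Sum>i\<in>UNIV. v $ i * (\<Sum>j\<in>UNIV. D $ j $ i * f j x))) (at x)"
    by (intro has_vector_derivative_sum has_vector_derivative_mult_right D_deriv)
  also have "(\<Sum>i\<in>UNIV. v $ i * (\<Sum>j\<in>UNIV. D $ j $ i * f j x)) = (\<Sum>i\<in>UNIV. (D *v v) $ i * f i x)"
  proof -
    have "(\<Sum>i\<in>UNIV. v $ i * (\<Sum>j\<in>UNIV. D $ j $ i * f j x)) = (\<Sum>i\<in>UNIV. \<Sum>j\<in>UNIV. D $ j $ i * v $ i * f j x)"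
      by (simp add: sum_distrib_left mult_ac)
    also have "\<dots> = (\<Sum>j\<in>UNIV. \<Sum>i\<in>UNIV. D $ j $ i * v $ i * f j x)"
      by (rule sum.swap)
    also have "\<dots> = (\<Sum>j\<in>UNIV. (D *v v) $ j * f j x)"
      by (simp add: matrix_vector_mult_def sum_distrib_right)
    finally show ?thesis .
  qed
  finally show ?thesis .
qed

lemma nth_lin:
  fixes f :: "'m::finite \<Rightarrow> real \<Rightarrow> complex" and D :: "complex^'m^'m"
  assumes D_deriv: "\<And>i x. (f i has_vector_derivative (\<Sum>j\<in>UNIV. D $ j $ i * f j x)) (at x)"
  shows "nth_vderiv k (\<lambda>x. \<Sum>i\<in>UNIV. v $ i * f i x) = (\<lambda>x. \<Sum>i\<in>UNIV. (matpow D k *v v) $ i * f i x)"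
proof (induction k)
  case 0 show ?case by simp
next
  case (Suc k)
  show ?case
    by (simp add: Suc vector_derivative_at[OF lin_deriv[OF D_deriv]] matrix_vector_mul_assoc)
qed

theorem mainTheorem4:
  fixes f :: "'m::finite \<Rightarrow> real \<Rightarrow> complex"
    and D :: "complex^'m^'m"
    and \<phi> :: "complex poly" and n :: nat
    and c :: "nat \<Rightarrow> complex"
    and gv :: "complex^'m"
  assumes basis_indep: "\<And>a. (\<forall>x. (\<Sum>i\<in>UNIV. a i * f i x) = 0) \<Longrightarrow> (\<forall>i. a i = 0)"
    and D_deriv: "\<And>i x. (f i has_vector_derivative (\<Sum>j\<in>UNIV. D $ j $ i * f j x)) (at x)"
    and deg: "degree \<phi> = n"
    and a0: "poly \<phi> 0 \<noteq> 0"
    and maclaurin: "\<exists>r>0. \<forall>s::complex. norm s < r \<longrightarrow> (\<lambda>k. c k * s ^ k) sums (1 / poly \<phi> s)"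
    and inv: "invertible (poly_matrix \<phi> D)"
  shows
    "(\<exists>r>0. \<forall>t::complex. norm t < r \<longrightarrow>
         invertible (poly_matrix \<phi> (mat_scale t D)) \<and>
         (\<lambda>k. (c k * t ^ k) *s (matpow D k *v gv))
            sums (matrix_inv (poly_matrix \<phi> (mat_scale t D)) *v gv))
     \<and> (\<forall>j. \<exists>p q :: complex poly. poly q 0 \<noteq> 0 \<and> poly q 1 \<noteq> 0 \<and>
            (\<forall>t. invertible (poly_matrix \<phi> (mat_scale t D)) \<longrightarrow>
               (matrix_inv (poly_matrix \<phi> (mat_scale t D)) *v gv) $ j = poly p t / poly q t))
     \<and> (\<forall>j. euler_sums (\<lambda>k. ((c k) *s (matpow D k *v gv)) $ j)
                        ((matrix_inv (poly_matrix \<phi> D) *v gv) $ j))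
     \<and> (let yp = (\<lambda>x. \<Sum>i\<in>UNIV. (matrix_inv (poly_matrix \<phi> D) *v gv) $ i * f i x);
            g = (\<lambda>x. \<Sum>i\<in>UNIV. gv $ i * f i x)
        in (\<forall>k x. (nth_vderiv k yp has_vector_derivative nth_vderiv (Suc k) yp x) (at x)) \<and>
           (\<forall>x. (\<Sum>k\<le>degree \<phi>. coeff \<phi> k * nth_vderiv k yp x) = g x))"
proof -
  define A where "A t = poly_matrix \<phi> (mat_scale t D)" for t
  define q where "q = det (PM \<phi> D)"
  define p where "p j = det (\<chi> i l. if l = j then [:gv $ i:] else PM \<phi> D $ i $ l)" for j
  have A_eq: "A t = (\<chi> i l. poly (PM \<phi> D $ i $ l) t)" for t
    by (simp add: A_def poly_matrix_scale_PM)
  have detA: "det (A t) = poly q t" for t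
    by (simp add: A_eq q_def det_poly)
  have A1: "A 1 = poly_matrix \<phi> D"
    by (simp add: A_def mat_scale_def)
  have q1: "poly q 1 \<noteq> 0"
    using inv detA[of 1] by (simp add: A1 invertible_det_nz)
  have PM0: "poly (PM \<phi> D $ i $ l) 0 = (if i = l then coeff \<phi> 0 else 0)" for i l
    by (simp add: PM_def poly_sum poly_monom power_0_left mat_def sum_delta0)
  have c0: "coeff \<phi> 0 \<noteq> 0" using a0 by (simp add: poly_0_coeff_0)
  have q0: "poly q 0 \<noteq> 0"
  proof -
    have "poly q 0 = det ((\<chi> i l. poly (PM \<phi> D $ i $ l) (0::complex)) :: complex^'m^'m)"
      by (simp add: q_def det_poly)
    also have "\<dots> = (\<Prod>i\<in>(UNIV::'m set). coeff \<phi> 0)"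
      by (subst det_diagonal) (auto simp: PM0)
    finally show ?thesis using c0 by simp
  qed
  have rat: "(matrix_inv (A t) *v gv) $ j = poly (p j) t / poly q t" if "invertible (A t)" for t j
  proof -
    have dA: "det (A t) \<noteq> 0" using that by (simp add: invertible_det_nz)
    have "A t *v (matrix_inv (A t) *v gv) = gv" by (rule matrix_inv_apply2[OF that])
    then have "matrix_inv (A t) *v gv = (\<chi> k. det(\<chi> i l. if l=k then gv$i else A t$i$l) / det (A t))"
      using cramer[OF dA] by blast
    then have "(matrix_inv (A t) *v gv) $ j = det(\<chi> i l. if l=j then gv$i else A t$i$l) / det (A t)"
      by simp
    also have "(\<chi> i l. if l=j then gv$i else A t$i$l) =
               (\<chi> i l. poly ((\<chi> i l. if l = j then [:gv $ i:] else PM \<phi> D $ i $ l) $ i $ l) t)"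
      by (simp add: A_eq vec_eq_iff)
    finally show ?thesis by (simp only: det_poly p_def detA)
  qed
  have "eventually (\<lambda>t. poly q t \<noteq> 0) (nhds (0::complex))"
  proof (rule tendsto_imp_eventually_ne)
    have "isCont (poly q) 0" by simp
    then show "(poly q \<longlongrightarrow> poly q 0) (nhds 0)"
      by (simp add: isCont_def tendsto_at_iff_tendsto_nhds)
  qed (use q0 in auto)
  then obtain r2 where r2: "r2 > 0" "\<And>t::complex. dist t 0 < r2 \<Longrightarrow> poly q t \<noteq> 0"
    unfolding eventually_nhds_metric by blast
  obtain r1 where r1: "r1 > 0" "\<And>t::complex. norm t < r1 \<Longrightarrow>
     summable (\<lambda>k. (c k * t ^ k) *s (matpow D k *v gv)) \<and>
     A t *v (\<Sum>k. (c k * t ^ k) *s (matpow D k *v gv)) = gv"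
    using series_part[OF a0 maclaurin, of D gv] unfolding A_def by blast
  define r where "r = min r1 r2"
  have rpos: "r > 0" using r1 r2 by (simp add: r_def)
  have P1: "invertible (A t) \<and> (\<lambda>k. (c k * t ^ k) *s (matpow D k *v gv)) sums (matrix_inv (A t) *v gv)"
    if t: "norm t < r" for t
  proof -
    have iA: "invertible (A t)" using r2(2)[of t] t detA[of t]
      by (simp add: r_def invertible_det_nz)
    from r1(2)[of t] t have s: "summable (\<lambda>k. (c k * t ^ k) *s (matpow D k *v gv))"
      and e: "A t *v (\<Sum>k. (c k * t ^ k) *s (matpow D k *v gv)) = gv" by (auto simp: r_def)
    have "matrix_inv (A t) *v gv = (\<Sum>k. (c k * t ^ k) *s (matpow D k *v gv))"
      by (rule matrix_inv_apply[OF iA e])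
    with s iA show ?thesis by (simp add: summable_sums)
  qed
  have part1: "\<exists>r>0. \<forall>t::complex. norm t < r \<longrightarrow>
         invertible (poly_matrix \<phi> (mat_scale t D)) \<and>
         (\<lambda>k. (c k * t ^ k) *s (matpow D k *v gv))
            sums (matrix_inv (poly_matrix \<phi> (mat_scale t D)) *v gv)"
    using rpos P1 unfolding A_def by blast
  have part2: "\<forall>j. \<exists>p q :: complex poly. poly q 0 \<noteq> 0 \<and> poly q 1 \<noteq> 0 \<and>
            (\<forall>t. invertible (poly_matrix \<phi> (mat_scale t D)) \<longrightarrow>
               (matrix_inv (poly_matrix \<phi> (mat_scale t D)) *v gv) $ j = poly p t / poly q t)"
    using q0 q1 rat unfolding A_def by blast
  have part3: "euler_sums (\<lambda>k. ((c k) *s (matpow D k *v gv)) $ j)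
                        ((matrix_inv (poly_matrix \<phi> D) *v gv) $ j)" for j
    unfolding euler_sums_def
  proof (intro exI conjI allI impI)
    show "r > 0" by (rule rpos)
    have comp: "(\<lambda>n. ((c n) *s (matpow D n *v gv)) $ j * t ^ n) sums ((matrix_inv (A t) *v gv) $ j)"
      if "norm t < r" for t
    proof -
      have "(\<lambda>n. ((c n * t ^ n) *s (matpow D n *v gv)) $ j) sums ((matrix_inv (A t) *v gv) $ j)"
        by (rule bounded_linear.sums[OF bounded_linear_vec_nth]) (use P1[OF that] in blast)
      then show ?thesis by (simp add: mult_ac)
    qed
    fix t :: complex assume "norm t < r"
    then show "summable (\<lambda>n. ((c n) *s (matpow D n *v gv)) $ j * t ^ n)"
      using comp sums_summable by blast
  next
    define U where "U = - {t. poly q t = 0}"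
    have fin: "finite {t. poly q t = 0}"
      by (rule poly_roots_finite) (use q0 in auto)
    show "open U" unfolding U_def using fin by (simp add: finite_imp_closed open_Compl)
    show "connected U" unfolding U_def
      by (rule path_connected_imp_connected, rule path_connected_complement_countable)
         (use fin in \<open>auto intro: countable_finite\<close>)
    show "0 \<in> U" "1 \<in> U" using q0 q1 by (auto simp: U_def)
    show "(\<lambda>t. poly (p j) t / poly q t) holomorphic_on U"
      unfolding U_def by (intro holomorphic_intros) auto
    show "\<forall>t\<in>U \<inter> ball 0 r. poly (p j) t / poly q t = (\<Sum>n. ((c n) *s (matpow D n *v gv)) $ j * t ^ n)"
    proof
      fix t assume "t \<in> U \<inter> ball 0 r"
      then have t: "norm t < r" by auto
      have "(\<lambda>n. ((c n) *s (matpow D n *v gv)) $ j * t ^ n) sums ((matrix_inv (A t) *v gv) $ j)"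
      proof -
        have "(\<lambda>n. ((c n * t ^ n) *s (matpow D n *v gv)) $ j) sums ((matrix_inv (A t) *v gv) $ j)"
          by (rule bounded_linear.sums[OF bounded_linear_vec_nth]) (use P1[OF t] in blast)
        then show ?thesis by (simp add: mult_ac)
      qed
      then have "(\<Sum>n. ((c n) *s (matpow D n *v gv)) $ j * t ^ n) = (matrix_inv (A t) *v gv) $ j"
        by (simp add: sums_unique[symmetric])
      also have "\<dots> = poly (p j) t / poly q t" using rat P1[OF t] by blast
      finally show "poly (p j) t / poly q t = (\<Sum>n. ((c n) *s (matpow D n *v gv)) $ j * t ^ n)" ..
    qed
    show "poly (p j) 1 / poly q 1 = (matrix_inv (poly_matrix \<phi> D) *v gv) $ j"
      using rat[of 1 j] inv by (simp add: A1)
  qed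
  have part4: "let yp = (\<lambda>x. \<Sum>i\<in>UNIV. (matrix_inv (poly_matrix \<phi> D) *v gv) $ i * f i x);
            g = (\<lambda>x. \<Sum>i\<in>UNIV. gv $ i * f i x)
        in (\<forall>k x. (nth_vderiv k yp has_vector_derivative nth_vderiv (Suc k) yp x) (at x)) \<and>
           (\<forall>x. (\<Sum>k\<le>degree \<phi>. coeff \<phi> k * nth_vderiv k yp x) = g x)"
  proof -
    define v where "v = matrix_inv (poly_matrix \<phi> D) *v gv"
    have nl: "nth_vderiv k (\<lambda>x. \<Sum>i\<in>UNIV. v $ i * f i x) = (\<lambda>x. \<Sum>i\<in>UNIV. (matpow D k *v v) $ i * f i x)" for k
      by (rule nth_lin[OF D_deriv])
    have d: "(nth_vderiv k (\<lambda>x. \<Sum>i\<in>UNIV. v $ i * f i x) has_vector_derivative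
             nth_vderiv (Suc k) (\<lambda>x. \<Sum>i\<in>UNIV. v $ i * f i x) x) (at x)" for k x
      unfolding nl using lin_deriv[OF D_deriv, of "matpow D k *v v" x]
      by (simp add: matrix_vector_mul_assoc)
    have e: "(\<Sum>k\<le>degree \<phi>. coeff \<phi> k * nth_vderiv k (\<lambda>x. \<Sum>i\<in>UNIV. v $ i * f i x) x)
             = (\<Sum>i\<in>UNIV. gv $ i * f i x)" for x
    proof -
      have "(\<Sum>k\<le>degree \<phi>. coeff \<phi> k * nth_vderiv k (\<lambda>x. \<Sum>i\<in>UNIV. v $ i * f i x) x)
          = (\<Sum>k\<le>degree \<phi>. \<Sum>i\<in>UNIV. coeff \<phi> k * (matpow D k *v v) $ i * f i x)"
        by (simp add: nl sum_distrib_left mult_ac)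
      also have "\<dots> = (\<Sum>i\<in>UNIV. \<Sum>k\<le>degree \<phi>. coeff \<phi> k * (matpow D k *v v) $ i * f i x)"
        by (rule sum.swap)
      also have "\<dots> = (\<Sum>i\<in>UNIV. (poly_matrix \<phi> D *v v) $ i * f i x)"
        by (simp add: poly_matrix_mult_vec sum_component sum_distrib_right)
      also have "poly_matrix \<phi> D *v v = gv"
        unfolding v_def by (rule matrix_inv_apply2[OF inv])
      finally show ?thesis .
    qed
    show ?thesis unfolding Let_def v_def[symmetric] using d e by blast
  qed
  show ?thesis using part1 part2 part3 part4 by blast
qed

end
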